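(* Let a vertex model on the periodic honeycomb lattice with period $1\times1$ have strictly positive signatures, be realizable, and satisfy Assumption (A). Let the realization produce odd matchgate signatures $(0,\gamma_1,\beta_1,0,\alpha_1,0,0,\delta_1)$ at the white vertex and $(0,\gamma_2,\beta_2,0,\alpha_2,0,0,\delta_2)$ at the black vertex, and set $a=\alpha_1\alpha_2$, $b=\beta_1\beta_2$, $c=\gamma_1\gamma_2$, $d=\delta_1\delta_2$. Then $$(a+b-c-d)(a+c-b-d)(a+d-b-c)>0\qquad\text{and}\qquad a+b+c+d>0.$$
   Context: Signatures are vectors indexed by local configurations $000,001,\dots,111$ of the incident $(a,b,c)$-edges. A realization assigns to each edge an invertible $2\times 2$ matrix $T_e$ (for period $1\times 1$ all edges of a type share one matrix) and to each vertex a matchgate signature $m_v$ with $m_v=(T_a\otimes T_b\otimes T_c)r_v$ at black and $m_v=((T_a\otimes T_b\otimes T_c)^t)^{-1}r_v$ at white vertices, satisfying the parity constraint; after relabelling bases one may assume all matchgates are odd, i.e. $m_v$ vanishes at $000,011,101,110$. Assumption (A): all entries of base change matrices are nonzero and all matchgate signature entries not forced to vanish by parity are nonzero. *)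

theory Defs
  imports "HOL-Analysis.Analysis" "HOL-Library.Complex_Order"
begin

text \<open>Local configurations of the three incident edges (a,b,c) are triples of
  indices of type 2; index 1 stands for bit 0 and index 2 for bit 1, so e.g. the
  configuration 001 is (1,1,2).\<close>

type_synonym sig3 = "2 \<Rightarrow> 2 \<Rightarrow> 2 \<Rightarrow> complex"

definition tensor3 :: "complex^2^2 \<Rightarrow> complex^2^2 \<Rightarrow> complex^2^2 \<Rightarrow> sig3 \<Rightarrow> sig3" where
  "tensor3 A B C r = (\<lambda>x y z. \<Sum>x'\<in>UNIV. \<Sum>y'\<in>UNIV. \<Sum>z'\<in>UNIV.
      A $ x $ x' * B $ y $ y' * C $ z $ z' * r x' y' z')"

definition odd_sig :: "sig3 \<Rightarrow> bool" where
  "odd_sig m \<longleftrightarrow> m 1 1 1 = 0 \<and> m 1 2 2 = 0 \<and> m 2 1 2 = 0 \<and> m 2 2 1 = 0"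

end

theory Submission
  imports Defs
begin

lemma inv_rel:
  fixes T :: "complex^2^2"
  assumes "invertible T"
  shows "\<And>i j. (\<Sum>k\<in>UNIV. matrix_inv (transpose T) $ k $ i * T $ k $ j) = (if i = j then 1 else 0)"
proof -
  obtain T' where 1: "T ** T' = mat 1" and 2: "T' ** T = mat 1" using assms unfolding invertible_def by blast
  have "transpose T ** transpose T' = mat 1 \<and> transpose T' ** transpose T = mat 1"
    by (metis 1 2 matrix_transpose_mul transpose_mat)
  hence "\<exists>A'. transpose T ** A' = mat 1 \<and> A' ** transpose T = mat 1" by blast
  hence "transpose T ** matrix_inv (transpose T) = mat 1 \<and> matrix_inv (transpose T) ** transpose T = mat 1"
    unfolding matrix_inv_def by (rule someI_ex)
  hence M: "transpose T ** matrix_inv (transpose T) = mat 1" by blast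
  fix i j
  have "(transpose T ** matrix_inv (transpose T)) $ j $ i = (mat 1 :: complex^2^2) $ j $ i" using M by simp
  thus "(\<Sum>k\<in>UNIV. matrix_inv (transpose T) $ k $ i * T $ k $ j) = (if i = j then 1 else 0)"
    by (auto simp: matrix_matrix_mult_def transpose_def mat_def mult.commute)
qed

lemma tensor3_nest: "tensor3 A B C r x y z = (\<Sum>x'\<in>UNIV. A$x$x' * (\<Sum>y'\<in>UNIV. B$y$y' * (\<Sum>z'\<in>UNIV. C$z$z' * r x' y' z')))"
  by (simp add: tensor3_def sum_distrib_left mult.assoc)

lemma contract:
  fixes U T :: "complex^2^2"
  assumes d: "\<And>i j. (\<Sum>k\<in>UNIV. U$k$i * T$k$j) = (if i=j then 1 else 0)"
  shows "(\<Sum>x\<in>UNIV. (\<Sum>x1\<in>UNIV. U$x$x1 * f x1) * (\<Sum>x2\<in>UNIV. T$x$x2 * g x2)) = (\<Sum>x1\<in>UNIV. f x1 * g x1)"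
proof -
  have "(\<Sum>x\<in>UNIV. (\<Sum>x1\<in>UNIV. U$x$x1 * f x1) * (\<Sum>x2\<in>UNIV. T$x$x2 * g x2))
     = (\<Sum>x1\<in>UNIV. \<Sum>x2\<in>UNIV. (\<Sum>x\<in>UNIV. U$x$x1 * T$x$x2) * (f x1 * g x2))"
    by (simp add: sum_2 algebra_simps)
  also have "\<dots> = (\<Sum>x1\<in>UNIV. f x1 * g x1)" using d by (simp add: sum_2)
  finally show ?thesis .
qed

lemma contract2:
  fixes U T :: "complex^2^2"
  assumes d: "\<And>i j. (\<Sum>k\<in>UNIV. U$k$i * T$k$j) = (if i=j then 1 else 0)"
  shows "(\<Sum>k\<in>UNIV. T$k$j * (\<Sum>i\<in>UNIV. U$k$i * X i)) = X j"
proof -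
  have "(\<Sum>k\<in>UNIV. T$k$j * (\<Sum>i\<in>UNIV. U$k$i * X i)) = (\<Sum>i\<in>UNIV. (\<Sum>k\<in>UNIV. U$k$i * T$k$j) * X i)"
    by (simp add: sum_2 algebra_simps)
  also have "\<dots> = X j" using d by (simp add: sum_2) (metis exhaust_2)
  finally show ?thesis .
qed

lemma core:
  fixes A B C UA UB UC :: "complex^2^2"
  assumes mb: "mb = tensor3 A B C rb" and mw: "mw = tensor3 UA UB UC rw"
    and dA: "\<And>i j. (\<Sum>k\<in>UNIV. UA$k$i * A$k$j) = (if i=j then 1 else 0)"
    and dB: "\<And>i j. (\<Sum>k\<in>UNIV. UB$k$i * B$k$j) = (if i=j then 1 else 0)"
    and dC: "\<And>i j. (\<Sum>k\<in>UNIV. UC$k$i * C$k$j) = (if i=j then 1 else 0)"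
  shows "(\<Sum>z''\<in>UNIV. C$z''$z * (\<Sum>x\<in>UNIV. \<Sum>y\<in>UNIV. mw x y z'' * mb x y z'))
       = (\<Sum>w\<in>UNIV. (\<Sum>x\<in>UNIV. \<Sum>y\<in>UNIV. rw x y z * rb x y w) * C$z'$w)"
proof -
  have s1: "(\<Sum>x\<in>UNIV. \<Sum>y\<in>UNIV. mw x y z'' * mb x y z') =
     (\<Sum>x1\<in>UNIV. \<Sum>y1\<in>UNIV. (\<Sum>z1\<in>UNIV. UC$z''$z1 * rw x1 y1 z1) * (\<Sum>w\<in>UNIV. C$z'$w * rb x1 y1 w))" for z''
  proof -
    have "(\<Sum>x\<in>UNIV. \<Sum>y\<in>UNIV. mw x y z'' * mb x y z') = (\<Sum>y\<in>UNIV. \<Sum>x\<in>UNIV. mw x y z'' * mb x y z')"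
      by (rule sum.swap)
    also have "\<dots> = (\<Sum>y\<in>UNIV. \<Sum>x1\<in>UNIV.
        (\<Sum>y'\<in>UNIV. UB$y$y' * (\<Sum>z1\<in>UNIV. UC$z''$z1 * rw x1 y' z1)) *
        (\<Sum>y'\<in>UNIV. B$y$y' * (\<Sum>w\<in>UNIV. C$z'$w * rb x1 y' w)))"
      unfolding mb mw tensor3_nest by (rule sum.cong[OF refl], rule contract[OF dA])
    also have "\<dots> = (\<Sum>x1\<in>UNIV. \<Sum>y\<in>UNIV.
        (\<Sum>y'\<in>UNIV. UB$y$y' * (\<Sum>z1\<in>UNIV. UC$z''$z1 * rw x1 y' z1)) *
        (\<Sum>y'\<in>UNIV. B$y$y' * (\<Sum>w\<in>UNIV. C$z'$w * rb x1 y' w)))"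
      by (rule sum.swap)
    also have "\<dots> = (\<Sum>x1\<in>UNIV. \<Sum>y1\<in>UNIV. (\<Sum>z1\<in>UNIV. UC$z''$z1 * rw x1 y1 z1) * (\<Sum>w\<in>UNIV. C$z'$w * rb x1 y1 w))"
      by (rule sum.cong[OF refl], rule contract[OF dB])
    finally show ?thesis .
  qed
  have s2: "(\<Sum>x1\<in>UNIV. \<Sum>y1\<in>UNIV. (\<Sum>z1\<in>UNIV. UC$z''$z1 * rw x1 y1 z1) * (\<Sum>w\<in>UNIV. C$z'$w * rb x1 y1 w))
      = (\<Sum>z1\<in>UNIV. UC$z''$z1 * (\<Sum>w\<in>UNIV. (\<Sum>x\<in>UNIV. \<Sum>y\<in>UNIV. rw x y z1 * rb x y w) * C$z'$w))" for z''
    by (simp add: sum_2 algebra_simps)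
  show ?thesis unfolding s1 s2 by (rule contract2[OF dC])
qed

lemma real_root:
  fixes r :: complex and s p :: real
  assumes "r*r - of_real s * r + of_real p = 0" "p < 0"
  shows "Im r = 0"
proof -
  have re: "Re r * Re r - Im r * Im r - s * Re r + p = 0" using arg_cong[OF assms(1), of Re] by simp
  have im: "Im r * (2 * Re r - s) = 0" using arg_cong[OF assms(1), of Im] by (simp add: algebra_simps)
  show ?thesis
  proof (rule ccontr)
    assume "Im r \<noteq> 0"
    with im have "s = 2 * Re r" by simp
    with re have "- (Re r * Re r) - Im r * Im r + p = 0" by (simp add: algebra_simps)
    moreover have "Re r * Re r \<ge> 0" "Im r * Im r \<ge> 0" by simp_all
    ultimately show False using assms(2) by linarith
  qed
qed

lemma edge22:
  fixes k11 k12 k21 k22 :: real and t11 t12 t21 t22 l1 l2 :: complex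
  assumes pos: "k11 > 0" "k12 > 0" "k21 > 0" "k22 > 0"
    and nz: "t11 \<noteq> 0" "t21 \<noteq> 0"
    and det: "t11 * t22 \<noteq> t12 * t21"
    and e11: "of_real k11 * t11 + of_real k12 * t12 = l1 * t11"
    and e12: "of_real k21 * t11 + of_real k22 * t12 = l1 * t12"
    and e21: "of_real k11 * t21 + of_real k12 * t22 = l2 * t21"
    and e22: "of_real k21 * t21 + of_real k22 * t22 = l2 * t22"
  shows "\<exists>x1 x2. l1 = of_real x1 \<and> l2 = of_real x2 \<and> x1 + x2 > 0 \<and>
     ((\<exists>\<rho>>0. t12 = of_real \<rho> * t11) \<and> x2 < x1 \<or> (\<exists>\<rho>>0. t22 = of_real \<rho> * t21) \<and> x1 < x2)"
proof -
  define r1 where "r1 = t12 / t11"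
  define r2 where "r2 = t22 / t21"
  have t12: "t12 = r1 * t11" and t22: "t22 = r2 * t21" using nz by (simp_all add: r1_def r2_def)
  have "(of_real k11 + of_real k12 * r1 - l1) * t11 = 0" using e11 unfolding t12 by (simp add: algebra_simps)
  hence l1: "l1 = of_real k11 + of_real k12 * r1" using nz by simp
  have "(of_real k11 + of_real k12 * r2 - l2) * t21 = 0" using e21 unfolding t22 by (simp add: algebra_simps)
  hence l2: "l2 = of_real k11 + of_real k12 * r2" using nz by simp
  have "(of_real k21 + of_real k22 * r1 - l1 * r1) * t11 = 0" using e12 unfolding t12 by (simp add: algebra_simps)
  hence q1: "of_real k21 + of_real k22 * r1 - l1 * r1 = 0" using nz by simp
  have "(of_real k21 + of_real k22 * r2 - l2 * r2) * t21 = 0" using e22 unfolding t22 by (simp add: algebra_simps)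
  hence q2: "of_real k21 + of_real k22 * r2 - l2 * r2 = 0" using nz by simp
  have neq: "r1 \<noteq> r2" using det unfolding t12 t22 by auto
  have "(r1 - r2) * (of_real k12 * (r1 + r2) + of_real k11 - of_real k22)
      = (of_real k21 + of_real k22 * r2 - l2 * r2) - (of_real k21 + of_real k22 * r1 - l1 * r1)"
    unfolding l1 l2 by (simp add: algebra_simps)
  hence "(r1 - r2) * (of_real k12 * (r1 + r2) + of_real k11 - of_real k22) = 0" using q1 q2 by simp
  hence sum0: "of_real k12 * (r1 + r2) + of_real k11 - of_real k22 = 0" using neq by simp
  hence sum: "of_real k12 * (r1 + r2) = of_real k22 - of_real k11" by (simp add: algebra_simps)
  have "of_real k12 * (r1 * r2) + of_real k21 = r1 * (of_real k12 * (r1 + r2) + of_real k11 - of_real k22)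
        + (of_real k21 + of_real k22 * r1 - l1 * r1)"
    unfolding l1 by (simp add: algebra_simps)
  hence prod: "of_real k12 * (r1 * r2) = - of_real k21" using sum0 q1 by (simp add: add_eq_0_iff)
  define s where "s = (k22 - k11) / k12"
  define p where "p = - k21 / k12"
  have sumr: "r1 + r2 = of_real s" using sum pos unfolding s_def by (simp add: field_simps)
  have prodr: "r1 * r2 = of_real p" using prod pos unfolding p_def by (simp add: field_simps)
  have p0: "p < 0" using pos unfolding p_def by simp
  have "r1 * r1 - of_real s * r1 + of_real p = 0" using sumr prodr by (simp add: algebra_simps flip: sumr prodr)
  hence "Im r1 = 0" using p0 by (rule real_root)
  hence r1r: "r1 = of_real (Re r1)" by (simp add: complex_eq_iff)
  have "r2 * r2 - of_real s * r2 + of_real p = 0" using sumr prodr by (simp add: algebra_simps flip: sumr prodr)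
  hence "Im r2 = 0" using p0 by (rule real_root)
  hence r2r: "r2 = of_real (Re r2)" by (simp add: complex_eq_iff)
  define x1 where "x1 = k11 + k12 * Re r1"
  define x2 where "x2 = k11 + k12 * Re r2"
  have L1: "l1 = of_real x1" unfolding l1 x1_def by (subst r1r) simp
  have L2: "l2 = of_real x2" unfolding l2 x2_def by (subst r2r) simp
  have "Re r1 + Re r2 = s" using arg_cong[OF sumr, of Re] by simp
  hence S: "x1 + x2 = k11 + k22" unfolding x1_def x2_def s_def using pos by (simp add: field_simps)
  have P: "Re r1 * Re r2 < 0" using r1r r2r prodr p0
    by (metis Re_complex_of_real of_real_mult)
  show ?thesis
  proof (cases "Re r1 > 0")
    case True
    hence "Re r2 < 0" using P by (smt (verit) mult_nonneg_nonneg)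
    hence "x2 < x1" using True pos unfolding x1_def x2_def by (smt (verit) mult_pos_pos mult_pos_neg)
    moreover have "t12 = of_real (Re r1) * t11" using t12 r1r by simp
    ultimately show ?thesis using L1 L2 S pos True by (intro exI[of _ x1] exI[of _ x2]) auto
  next
    case False
    hence "Re r1 < 0" using P by (cases "Re r1 = 0") auto
    hence r2p: "Re r2 > 0" using P by (smt (verit) mult_nonpos_nonpos)
    hence "x1 < x2" using \<open>Re r1 < 0\<close> pos unfolding x1_def x2_def by (smt (verit) mult_pos_pos mult_pos_neg)
    moreover have "t22 = of_real (Re r2) * t21" using t22 r2r by simp
    ultimately show ?thesis using L1 L2 S pos r2p by (intro exI[of _ x1] exI[of _ x2]) auto
  qed
qed

lemma edge_from:
  fixes C :: "complex^2^2" and K N :: "2 \<Rightarrow> 2 \<Rightarrow> complex" and n1 n2 :: complex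
  assumes E: "\<And>z z'. (\<Sum>z''\<in>UNIV. C$z''$z * N z'' z') = (\<Sum>w\<in>UNIV. K z w * C$z'$w)"
    and N: "N 1 1 = n1" "N 2 2 = n2" "N 1 2 = 0" "N 2 1 = 0"
    and Kp: "\<And>i j. Im (K i j) = 0 \<and> Re (K i j) > 0"
    and nz: "\<And>i j. C$i$j \<noteq> 0" and det: "C$1$1 * C$2$2 \<noteq> C$1$2 * C$2$1"
  shows "\<exists>x1 x2. n1 = of_real x1 \<and> n2 = of_real x2 \<and> x1 + x2 > 0 \<and>
     ((\<exists>\<rho>>0. C$1$2 = of_real \<rho> * C$1$1) \<and> x2 < x1 \<or> (\<exists>\<rho>>0. C$2$2 = of_real \<rho> * C$2$1) \<and> x1 < x2)"
proof -
  define k where "k i j = Re (K i j)" for i j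
  have Kk: "K i j = of_real (k i j)" for i j using Kp[of i j] unfolding k_def by (simp add: complex_eq_iff)
  have kp: "k i j > 0" for i j using Kp[of i j] unfolding k_def by simp
  note E' = E[unfolded Kk sum_2]
  show ?thesis
  proof (rule edge22[of "k 1 1" "k 1 2" "k 2 1" "k 2 2" "C$1$1" "C$2$1" "C$2$2" "C$1$2" n1 n2])
    show "k 1 1 > 0" "k 1 2 > 0" "k 2 1 > 0" "k 2 2 > 0" using kp by auto
    show "C$1$1 \<noteq> 0" "C$2$1 \<noteq> 0" using nz by auto
    show "C$1$1 * C$2$2 \<noteq> C$1$2 * C$2$1" by (rule det)
    show "of_real (k 1 1) * C$1$1 + of_real (k 1 2) * C$1$2 = n1 * C$1$1"
      using E'[of 1 1] N by (simp add: algebra_simps)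
    show "of_real (k 2 1) * C$1$1 + of_real (k 2 2) * C$1$2 = n1 * C$1$2"
      using E'[of 2 1] N by (simp add: algebra_simps)
    show "of_real (k 1 1) * C$2$1 + of_real (k 1 2) * C$2$2 = n2 * C$2$1"
      using E'[of 1 2] N by (simp add: algebra_simps)
    show "of_real (k 2 1) * C$2$1 + of_real (k 2 2) * C$2$2 = n2 * C$2$2"
      using E'[of 2 2] N by (simp add: algebra_simps)
  qed
qed

lemma Kpos:
  fixes rw rb :: sig3
  assumes "\<And>x y z. rw x y z > 0" "\<And>x y z. rb x y z > 0"
  shows "Im (\<Sum>x\<in>UNIV. \<Sum>y\<in>UNIV. rw x y i * rb x y j) = 0 \<and> Re (\<Sum>x\<in>UNIV. \<Sum>y\<in>UNIV. rw x y i * rb x y j) > 0"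
proof -
  have w: "Im (rw x y z) = 0" "Re (rw x y z) > 0" for x y z using assms(1)[of x y z] by (auto simp: less_complex_def)
  have b: "Im (rb x y z) = 0" "Re (rb x y z) > 0" for x y z using assms(2)[of x y z] by (auto simp: less_complex_def)
  show ?thesis by (simp add: sum_2 w b add_pos_pos)
qed

lemma mb_nz:
  fixes A B C :: "complex^2^2" and rb :: sig3
  assumes pos: "\<And>x y z. rb x y z > 0"
    and a: "A$i$2 = of_real \<rho>a * A$i$1" "\<rho>a > 0" "A$i$1 \<noteq> 0"
    and b: "B$j$2 = of_real \<rho>b * B$j$1" "\<rho>b > 0" "B$j$1 \<noteq> 0"
    and c: "C$k$2 = of_real \<rho>c * C$k$1" "\<rho>c > 0" "C$k$1 \<noteq> 0"
  shows "tensor3 A B C rb i j k \<noteq> 0"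
proof -
  define R where "R x y z = Re (rb x y z)" for x y z
  have rbR: "rb x y z = of_real (R x y z)" for x y z using pos[of x y z] unfolding R_def
    by (simp add: less_complex_def complex_eq_iff)
  have Rp: "R x y z > 0" for x y z using pos[of x y z] unfolding R_def by (simp add: less_complex_def)
  define S where "S = R 1 1 1 + \<rho>c * R 1 1 2 + \<rho>b * R 1 2 1 + \<rho>b * \<rho>c * R 1 2 2
     + \<rho>a * R 2 1 1 + \<rho>a * \<rho>c * R 2 1 2 + \<rho>a * \<rho>b * R 2 2 1 + \<rho>a * \<rho>b * \<rho>c * R 2 2 2"
  have Sp: "S > 0" unfolding S_def using Rp a(2) b(2) c(2) by (simp add: add_pos_pos mult_pos_pos)
  have "tensor3 A B C rb i j k = A$i$1 * B$j$1 * C$k$1 * of_real S"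
    unfolding tensor3_def sum_2 a(1) b(1) c(1) rbR S_def by (simp add: algebra_simps)
  thus ?thesis using Sp a(3) b(3) c(3) by simp
qed

definition rot :: "sig3 \<Rightarrow> sig3" where "rot r = (\<lambda>x y z. r y z x)"

lemma rot_tensor: "rot (tensor3 A B C r) = tensor3 C A B (rot r)"
  by (intro ext) (simp add: tensor3_def rot_def sum_2 algebra_simps)

lemma rot_odd: "odd_sig (rot m) = odd_sig m"
  by (auto simp: odd_sig_def rot_def)

lemma rot_pos: "(\<And>x y z. r x y z > 0) \<Longrightarrow> rot r x y z > 0"
  by (simp add: rot_def)

theorem lemma4p2:
  fixes Ta Tb Tc :: "complex^2^2"
    and rw rb mw mb :: sig3
  assumes pos_w: "\<And>x y z. rw x y z > 0"
    and pos_b: "\<And>x y z. rb x y z > 0"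
    and inv: "invertible Ta" "invertible Tb" "invertible Tc"
    and black: "mb = tensor3 Ta Tb Tc rb"
    and white: "mw = tensor3 (matrix_inv (transpose Ta)) (matrix_inv (transpose Tb))
                              (matrix_inv (transpose Tc)) rw"
    and odd: "odd_sig mw" "odd_sig mb"
    and A_T: "\<And>i j. Ta $ i $ j \<noteq> 0" "\<And>i j. Tb $ i $ j \<noteq> 0" "\<And>i j. Tc $ i $ j \<noteq> 0"
    and A_w: "mw 2 1 1 \<noteq> 0" "mw 1 2 1 \<noteq> 0" "mw 1 1 2 \<noteq> 0" "mw 2 2 2 \<noteq> 0"
    and A_b: "mb 2 1 1 \<noteq> 0" "mb 1 2 1 \<noteq> 0" "mb 1 1 2 \<noteq> 0" "mb 2 2 2 \<noteq> 0"
  defines "a \<equiv> mw 2 1 1 * mb 2 1 1"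
    and "b \<equiv> mw 1 2 1 * mb 1 2 1"
    and "c \<equiv> mw 1 1 2 * mb 1 1 2"
    and "d \<equiv> mw 2 2 2 * mb 2 2 2"
  shows "(a + b - c - d) * (a + c - b - d) * (a + d - b - c) > 0 \<and> a + b + c + d > 0"
proof -
  note dA = inv_rel[OF inv(1)] and dB = inv_rel[OF inv(2)] and dC = inv_rel[OF inv(3)]
  have det: "T$1$1 * T$2$2 \<noteq> T$1$2 * T$2$1" if "invertible (T::complex^2^2)" for T
    using that by (simp add: invertible_det_nz det_2)
  have conv: "\<exists>p::2. (\<exists>\<rho>>0. T$p$2 = of_real \<rho> * T$p$1) \<and> (p = 1 \<longrightarrow> x2 < x1) \<and> (p = 2 \<longrightarrow> x1 < x2)"
    if "(\<exists>\<rho>>0. T$1$2 = of_real \<rho> * T$1$1) \<and> x2 < x1 \<or> (\<exists>\<rho>>0. T$2$2 = of_real \<rho> * T$2$1) \<and> x1 < x2"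
    for T :: "complex^2^2" and x1 x2 :: real
    using that
    apply (elim disjE)
     apply (rule exI[of _ 1], simp)
    apply (rule exI[of _ 2], simp)
    done
  have bl1: "rot mb = tensor3 Tc Ta Tb (rot rb)" by (simp add: black rot_tensor)
  have wh1: "rot mw = tensor3 (matrix_inv (transpose Tc)) (matrix_inv (transpose Ta)) (matrix_inv (transpose Tb)) (rot rw)"
    by (simp add: white rot_tensor)
  have bl2: "rot (rot mb) = tensor3 Tb Tc Ta (rot (rot rb))" by (simp add: bl1 rot_tensor)
  have wh2: "rot (rot mw) = tensor3 (matrix_inv (transpose Tb)) (matrix_inv (transpose Tc)) (matrix_inv (transpose Ta)) (rot (rot rw))"
    by (simp add: wh1 rot_tensor)
  have ow: "mw 1 1 1 = 0" "mw 1 2 2 = 0" "mw 2 1 2 = 0" "mw 2 2 1 = 0" using odd(1) by (auto simp: odd_sig_def)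
  have ob: "mb 1 1 1 = 0" "mb 1 2 2 = 0" "mb 2 1 2 = 0" "mb 2 2 1 = 0" using odd(2) by (auto simp: odd_sig_def)
  have Rc: "\<exists>x1 x2. a + b = of_real x1 \<and> c + d = of_real x2 \<and> x1 + x2 > 0 \<and>
     ((\<exists>\<rho>>0. Tc$1$2 = of_real \<rho> * Tc$1$1) \<and> x2 < x1 \<or> (\<exists>\<rho>>0. Tc$2$2 = of_real \<rho> * Tc$2$1) \<and> x1 < x2)"
  proof (rule edge_from[where N="\<lambda>z'' z'. \<Sum>x\<in>UNIV. \<Sum>y\<in>UNIV. mw x y z'' * mb x y z'"
        and K="\<lambda>z w. \<Sum>x\<in>UNIV. \<Sum>y\<in>UNIV. rw x y z * rb x y w"])
    show "\<And>z z'. (\<Sum>z''\<in>UNIV. Tc$z''$z * (\<Sum>x\<in>UNIV. \<Sum>y\<in>UNIV. mw x y z'' * mb x y z'))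
       = (\<Sum>w\<in>UNIV. (\<Sum>x\<in>UNIV. \<Sum>y\<in>UNIV. rw x y z * rb x y w) * Tc$z'$w)"
      by (rule core[OF black white dA dB dC])
  qed (use ow ob Kpos[OF pos_w pos_b] A_T(3) det[OF inv(3)] in \<open>simp_all add: sum_2 a_def b_def c_def d_def algebra_simps\<close>)
  have Rb: "\<exists>x1 x2. a + c = of_real x1 \<and> b + d = of_real x2 \<and> x1 + x2 > 0 \<and>
     ((\<exists>\<rho>>0. Tb$1$2 = of_real \<rho> * Tb$1$1) \<and> x2 < x1 \<or> (\<exists>\<rho>>0. Tb$2$2 = of_real \<rho> * Tb$2$1) \<and> x1 < x2)"
  proof (rule edge_from[where N="\<lambda>z'' z'. \<Sum>x\<in>UNIV. \<Sum>y\<in>UNIV. rot mw x y z'' * rot mb x y z'"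
        and K="\<lambda>z w. \<Sum>x\<in>UNIV. \<Sum>y\<in>UNIV. rot rw x y z * rot rb x y w"])
    show "\<And>z z'. (\<Sum>z''\<in>UNIV. Tb$z''$z * (\<Sum>x\<in>UNIV. \<Sum>y\<in>UNIV. rot mw x y z'' * rot mb x y z'))
       = (\<Sum>w\<in>UNIV. (\<Sum>x\<in>UNIV. \<Sum>y\<in>UNIV. rot rw x y z * rot rb x y w) * Tb$z'$w)"
      by (rule core[OF bl1 wh1 dC dA dB])
  qed (use ow ob Kpos[OF rot_pos[OF pos_w] rot_pos[OF pos_b]] A_T(2) det[OF inv(2)] in \<open>simp_all add: rot_def sum_2 a_def b_def c_def d_def algebra_simps\<close>)
  have Ra: "\<exists>x1 x2. b + c = of_real x1 \<and> a + d = of_real x2 \<and> x1 + x2 > 0 \<and>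
     ((\<exists>\<rho>>0. Ta$1$2 = of_real \<rho> * Ta$1$1) \<and> x2 < x1 \<or> (\<exists>\<rho>>0. Ta$2$2 = of_real \<rho> * Ta$2$1) \<and> x1 < x2)"
  proof (rule edge_from[where N="\<lambda>z'' z'. \<Sum>x\<in>UNIV. \<Sum>y\<in>UNIV. rot (rot mw) x y z'' * rot (rot mb) x y z'"
        and K="\<lambda>z w. \<Sum>x\<in>UNIV. \<Sum>y\<in>UNIV. rot (rot rw) x y z * rot (rot rb) x y w"])
    show "\<And>z z'. (\<Sum>z''\<in>UNIV. Ta$z''$z * (\<Sum>x\<in>UNIV. \<Sum>y\<in>UNIV. rot (rot mw) x y z'' * rot (rot mb) x y z'))
       = (\<Sum>w\<in>UNIV. (\<Sum>x\<in>UNIV. \<Sum>y\<in>UNIV. rot (rot rw) x y z * rot (rot rb) x y w) * Ta$z'$w)"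
      by (rule core[OF bl2 wh2 dB dC dA])
  qed (use ow ob Kpos[OF rot_pos[OF rot_pos[OF pos_w]] rot_pos[OF rot_pos[OF pos_b]]] A_T(1) det[OF inv(1)] in \<open>simp_all add: rot_def sum_2 a_def b_def c_def d_def algebra_simps\<close>)
  from Rc obtain xc1 xc2 where c1: "a + b = of_real xc1" and c2: "c + d = of_real xc2" and cs: "xc1 + xc2 > 0"
    and cc: "(\<exists>\<rho>>0. Tc$1$2 = of_real \<rho> * Tc$1$1) \<and> xc2 < xc1 \<or> (\<exists>\<rho>>0. Tc$2$2 = of_real \<rho> * Tc$2$1) \<and> xc1 < xc2"
    by blast
  from Rb obtain xb1 xb2 where b1: "a + c = of_real xb1" and b2: "b + d = of_real xb2"
    and bc: "(\<exists>\<rho>>0. Tb$1$2 = of_real \<rho> * Tb$1$1) \<and> xb2 < xb1 \<or> (\<exists>\<rho>>0. Tb$2$2 = of_real \<rho> * Tb$2$1) \<and> xb1 < xb2"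
    by blast
  from Ra obtain xa1 xa2 where a1: "b + c = of_real xa1" and a2: "a + d = of_real xa2"
    and ac: "(\<exists>\<rho>>0. Ta$1$2 = of_real \<rho> * Ta$1$1) \<and> xa2 < xa1 \<or> (\<exists>\<rho>>0. Ta$2$2 = of_real \<rho> * Ta$2$1) \<and> xa1 < xa2"
    by blast
  obtain pa where pa: "\<exists>\<rho>>0. Ta$pa$2 = of_real \<rho> * Ta$pa$1" "pa = 1 \<longrightarrow> xa2 < xa1" "pa = 2 \<longrightarrow> xa1 < xa2"
    using conv[OF ac] by blast
  obtain pb where pb: "\<exists>\<rho>>0. Tb$pb$2 = of_real \<rho> * Tb$pb$1" "pb = 1 \<longrightarrow> xb2 < xb1" "pb = 2 \<longrightarrow> xb1 < xb2"
    using conv[OF bc] by blast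
  obtain pc where pc: "\<exists>\<rho>>0. Tc$pc$2 = of_real \<rho> * Tc$pc$1" "pc = 1 \<longrightarrow> xc2 < xc1" "pc = 2 \<longrightarrow> xc1 < xc2"
    using conv[OF cc] by blast
  have nzp: "mb pa pb pc \<noteq> 0"
  proof -
    from pa(1) obtain \<rho>a where ra: "\<rho>a > 0" "Ta$pa$2 = of_real \<rho>a * Ta$pa$1" by blast
    from pb(1) obtain \<rho>b where rb': "\<rho>b > 0" "Tb$pb$2 = of_real \<rho>b * Tb$pb$1" by blast
    from pc(1) obtain \<rho>c where rc: "\<rho>c > 0" "Tc$pc$2 = of_real \<rho>c * Tc$pc$1" by blast
    show ?thesis unfolding black
      using mb_nz[of rb Ta pa \<rho>a Tb pb \<rho>b Tc pc \<rho>c] pos_b ra rb' rc A_T by blast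
  qed
  have key: "(xc1 - xc2) * (xb1 - xb2) * (xa2 - xa1) > 0"
    using nzp pa(2,3) pb(2,3) pc(2,3) ob exhaust_2[of pa] exhaust_2[of pb] exhaust_2[of pc]
    by (auto simp: zero_less_mult_iff mult_less_0_iff)
  have e1: "a + b - c - d = of_real (xc1 - xc2)" using c1 c2 by (simp add: algebra_simps flip: c1 c2)
  have e2: "a + c - b - d = of_real (xb1 - xb2)" using b1 b2 by (simp add: algebra_simps flip: b1 b2)
  have e3: "a + d - b - c = of_real (xa2 - xa1)" using a1 a2 by (simp add: algebra_simps flip: a1 a2)
  have e4: "a + b + c + d = of_real (xc1 + xc2)" by (simp add: algebra_simps flip: c1 c2)
  show ?thesis unfolding e1 e2 e3 e4 using key cs
    by (simp add: less_complex_def del: of_real_diff of_real_add)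
qed

end
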